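(* There exist an objective $f:\mathbb{R}^d\to\mathbb{R}$ satisfying Assumptions 1 and 2, a stochastic gradient oracle $(F,\mathcal D)$ satisfying Assumption 3, an initial point $x^{(0)}$ and a constant $\epsilon_0>0$ such that for GaSare with an arbitrary subspace optimizer, any sparsity levels $k_\ell<m_\ell n_\ell$, any period $\tau\ge1$, any choice of the maps $\rho_\ell^{(t)}$ (with arbitrary hyperparameters), and every realization of the samples, $\|\nabla f(x^{(t)})\|_2^2\ge\epsilon_0$ for all $t\ge0$.
   Context: Parameters $x=(\mathrm{vec}(X_1)^\top,\dots,\mathrm{vec}(X_{N_L})^\top)^\top\in\mathbb{R}^d$, $X_\ell\in\mathbb{R}^{m_\ell\times n_\ell}$; $f(x)=\mathbb{E}_{\xi\sim\mathcal D}F(x;\xi)$; $\nabla_\ell$ is the gradient w.r.t. $X_\ell$. Assumption 1: $\inf f>-\infty$. Assumption 2: $\nabla f$ is $L$-Lipschitz in $\|\cdot\|_2$. Assumption 3: $\mathbb{E}_\xi[\nabla_\ell F(x;\xi)]=\nabla_\ell f(x)$ and $\mathbb{E}_\xi\|\nabla_\ell F(x;\xi)-\nabla_\ell f(x)\|_F^2\le\sigma_\ell^2$ for all $x,\ell$. GaSare with an arbitrary subspace optimizer: at each $t$ draw $\xi^{(t)}\sim\mathcal D$ independently and set $G_\ell^{(t)}=\nabla_\ell F(x^{(t)};\xi^{(t)})$; if $t\equiv0\pmod\tau$ let $S_\ell^{(t)}$ be a Top-$k_\ell$ mask of $G_\ell^{(t)}$ (the $0/1$ matrix with exactly $k_\ell$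 ones at positions of $k_\ell$ entries of largest absolute value, ties arbitrary), otherwise $S_\ell^{(t)}=S_\ell^{(t-1)}$; update $X_\ell^{(t+1)}=X_\ell^{(t)}+S_\ell^{(t)}\odot\rho_\ell^{(t)}(S_\ell^{(t)}\odot G_\ell^{(t)})$, where $\rho_\ell^{(t)}$ is an arbitrary (possibly stateful) map from $m_\ell\times n_\ell$ matrices to $m_\ell\times n_\ell$ matrices and $\odot$ is the entrywise product. *)

theory Defs
  imports "HOL-Analysis.Analysis" "HOL-Probability.Probability"
begin

text \<open>Parameters are vectors x :: real^'p over a finite index type 'p of all entries
  of all layer matrices; lay p is the layer of entry p, so the block of layer l is
  vec(X_l) and the Frobenius norm of a layer block is the Euclidean norm of its
  restriction.\<close>

definition layer :: "('p \<Rightarrow> 'l) \<Rightarrow> 'l \<Rightarrow> 'p set" where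
  "layer lay l = {p. lay p = l}"

definition blk :: "('p \<Rightarrow> 'l) \<Rightarrow> 'l \<Rightarrow> real^'p \<Rightarrow> real^'p" where
  "blk lay l v = (\<chi> p. if lay p = l then v $ p else 0)"

text \<open>Entrywise product with the 0/1 mask whose support is S.\<close>
definition mask_mult :: "'p set \<Rightarrow> real^'p \<Rightarrow> real^'p" where
  "mask_mult S v = (\<chi> p. if p \<in> S then v $ p else 0)"

definition is_topk :: "('p \<Rightarrow> 'l) \<Rightarrow> 'l \<Rightarrow> nat \<Rightarrow> real^'p \<Rightarrow> 'p set \<Rightarrow> bool" where
  "is_topk lay l k G S \<longleftrightarrow> S \<subseteq> layer lay l \<and> card S = k \<and>
     (\<forall>p\<in>S. \<forall>q\<in>layer lay l - S. \<bar>G $ q\<bar> \<le> \<bar>G $ p\<bar>)"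

text \<open>A trajectory (xs, S) of GaSare with an arbitrary subspace optimizer.
  gF x xi is the stochastic gradient at x for sample xi; xis t is the sample drawn at step t.
  rho t l is the (possibly stateful) map used at step t on layer l: its state is modelled by
  letting it see the whole history of its inputs S_l^(s) (.) G_l^(s), s \<le> t.\<close>
definition gasare_run ::
  "('p \<Rightarrow> 'l) \<Rightarrow> (real^'p \<Rightarrow> 'x \<Rightarrow> real^'p) \<Rightarrow> real^'p \<Rightarrow> ('l \<Rightarrow> nat) \<Rightarrow> nat \<Rightarrow>
   (nat \<Rightarrow> 'l \<Rightarrow> (nat \<Rightarrow> real^'p) \<Rightarrow> real^'p) \<Rightarrow> (nat \<Rightarrow> 'x) \<Rightarrow>
   (nat \<Rightarrow> real^'p) \<Rightarrow> (nat \<Rightarrow> 'l \<Rightarrow> 'p set) \<Rightarrow> bool" where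
  "gasare_run lay gF x0 k \<tau> rho xis xs S \<longleftrightarrow>
     xs 0 = x0 \<and>
     (\<forall>t l. (t mod \<tau> = 0 \<longrightarrow> is_topk lay l (k l) (gF (xs t) (xis t)) (S t l)) \<and>
            (t mod \<tau> \<noteq> 0 \<longrightarrow> S t l = S (t - 1) l)) \<and>
     (\<forall>t. xs (Suc t) = xs t +
        (\<chi> p. if p \<in> S t (lay p)
               then rho t (lay p)
                      (\<lambda>s. if s \<le> t then mask_mult (S s (lay p)) (gF (xs s) (xis s)) else 0) $ p
               else 0))"

end

theory Submission
  imports Defs
begin


lemma d1: fixes a w x :: "real^'p::finite"
  shows "((\<lambda>y. (a \<bullet> y)^2 + c * (w \<bullet> y)) has_derivative (\<lambda>h. ((2*(a\<bullet>x)) *\<^sub>R a + c *\<^sub>R w) \<bullet> h)) (at x)"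
proof -
  have "((\<lambda>y. (a \<bullet> y)*(a \<bullet> y) + c * (w \<bullet> y)) has_derivative (\<lambda>h. (a\<bullet>x)*(a\<bullet>h) + (a\<bullet>h)*(a\<bullet>x) + c*(w\<bullet>h))) (at x)"
    by (intro derivative_intros)
  then show ?thesis by (simp add: power2_eq_square inner_add_left algebra_simps)
qed

lemma topk_avoid:
  assumes "is_topk lay l k G S" "k < card (layer lay l)" "lay q0 = l"
    "\<And>p. lay p = l \<Longrightarrow> p \<noteq> q0 \<Longrightarrow> \<bar>G $ q0\<bar> < \<bar>G $ p\<bar>"
    "finite (layer lay l)"
  shows "q0 \<notin> S"
proof
  assume q: "q0 \<in> S"
  have sub: "S \<subseteq> layer lay l" "card S = k" using assms(1) unfolding is_topk_def by auto
  have "layer lay l - S \<noteq> {}"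
  proof
    assume "layer lay l - S = {}"
    then have "layer lay l \<subseteq> S" by blast
    then have "card (layer lay l) \<le> card S" using sub assms(5) by (meson card_mono finite_subset)
    then show False using sub assms(2) by simp
  qed
  then obtain p where p: "p \<in> layer lay l - S" by blast
  then have "\<bar>G $ p\<bar> \<le> \<bar>G $ q0\<bar>" using assms(1) q unfolding is_topk_def by blast
  moreover have "p \<noteq> q0" "lay p = l" using p q by (auto simp: layer_def)
  ultimately show False using assms(4) by force
qed

theorem theoremC3:
  fixes lay :: "'p::finite \<Rightarrow> 'l"
  assumes "surj lay"
  shows "\<exists>(f :: real^'p \<Rightarrow> real) (gf :: real^'p \<Rightarrow> real^'p)
            (F :: real^'p \<Rightarrow> nat \<Rightarrow> real) (gF :: real^'p \<Rightarrow> nat \<Rightarrow> real^'p)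
            (D :: nat pmf) (x0 :: real^'p) (\<epsilon>0 :: real).
     \<comment> \<open>gf is the gradient of f and gF x xi the gradient of F(.;xi) at x\<close>
     (\<forall>x. (f has_derivative (\<lambda>h. gf x \<bullet> h)) (at x)) \<and>
     (\<forall>x xi. ((\<lambda>y. F y xi) has_derivative (\<lambda>h. gF x xi \<bullet> h)) (at x)) \<and>
     \<comment> \<open>f(x) = E F(x;xi)\<close>
     (\<forall>x. integrable (measure_pmf D) (F x) \<and> f x = measure_pmf.expectation D (F x)) \<and>
     \<comment> \<open>Assumption 1\<close>
     bdd_below (range f) \<and>
     \<comment> \<open>Assumption 2\<close>
     (\<exists>L. \<forall>x y. norm (gf x - gf y) \<le> L * norm (x - y)) \<and>
     \<comment> \<open>Assumption 3\<close>
     (\<exists>\<sigma> :: 'l \<Rightarrow> real. \<forall>x l.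
        integrable (measure_pmf D) (\<lambda>xi. blk lay l (gF x xi)) \<and>
        measure_pmf.expectation D (\<lambda>xi. blk lay l (gF x xi)) = blk lay l (gf x) \<and>
        integrable (measure_pmf D) (\<lambda>xi. (norm (blk lay l (gF x xi - gf x)))\<^sup>2) \<and>
        measure_pmf.expectation D (\<lambda>xi. (norm (blk lay l (gF x xi - gf x)))\<^sup>2) \<le> (\<sigma> l)\<^sup>2) \<and>
     \<epsilon>0 > 0 \<and>
     \<comment> \<open>GaSare with any sparsity, period, maps, tie-breaking and sample realization\<close>
     (\<forall>(k :: 'l \<Rightarrow> nat) (\<tau> :: nat) rho (xis :: nat \<Rightarrow> nat) xs S.
        (\<forall>l. k l < card (layer lay l)) \<longrightarrow> \<tau> \<ge> 1 \<longrightarrow>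
        (\<forall>t. xis t \<in> set_pmf D) \<longrightarrow>
        gasare_run lay gF x0 k \<tau> rho xis xs S \<longrightarrow>
        (\<forall>t. (norm (gf (xs t)))\<^sup>2 \<ge> \<epsilon>0))"

proof -
  define q0 :: 'p where "q0 = undefined"
  define a :: "real^'p" where "a = axis q0 1"
  define w :: "real^'p" where "w = (\<chi> p. if p = q0 then 0 else 1)"
  define c :: "nat \<Rightarrow> real" where "c xi = (if xi = 0 then 3 else -3)" for xi
  define f :: "real^'p \<Rightarrow> real" where "f x = (a \<bullet> x)^2" for x
  define gf :: "real^'p \<Rightarrow> real^'p" where "gf x = (2*(a\<bullet>x)) *\<^sub>R a" for x
  define F :: "real^'p \<Rightarrow> nat \<Rightarrow> real" where "F x xi = (a \<bullet> x)^2 + c xi * (w \<bullet> x)" for x xi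
  define gF :: "real^'p \<Rightarrow> nat \<Rightarrow> real^'p" where "gF x xi = gf x + c xi *\<^sub>R w" for x xi
  define D :: "nat pmf" where "D = pmf_of_set {0,1}"
  define x0 :: "real^'p" where "x0 = (\<chi> p. 1)"
  have setD: "set_pmf D = {0,1}" unfolding D_def by (simp add: set_pmf_of_set)
  have intD: "integrable (measure_pmf D) g" for g :: "nat \<Rightarrow> 'z::{banach,second_countable_topology}"
    by (rule integrable_measure_pmf_finite) (simp add: setD)
  have expD: "measure_pmf.expectation D g = (g 0 + g 1) /\<^sub>R 2" for g :: "nat \<Rightarrow> 'z::{banach,second_countable_topology}"
  proof -
    have "measure_pmf.expectation D g = (\<Sum>i\<in>set_pmf D. pmf D i *\<^sub>R g i)"
      by (rule integral_measure_pmf) (auto simp: setD)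
    also have "\<dots> = (g 0 + g 1) /\<^sub>R 2" unfolding setD by (simp add: D_def scaleR_add_right)
    finally show ?thesis .
  qed

  have ax: "a \<bullet> x = x $ q0" for x unfolding a_def by (simp add: inner_axis')
  have gFc: "gF x xi $ p = (if p = q0 then 2 * x $ q0 else c xi)" for x xi p
    unfolding gF_def gf_def ax unfolding a_def w_def by (simp add: axis_def)
  have absc: "\<bar>c xi\<bar> = 3" for xi unfolding c_def by simp
  have fin: "finite (layer lay l)" for l by simp
  have main: "\<forall>t. xs t $ q0 = 1 \<and> q0 \<notin> S t (lay q0)"
    if k: "\<forall>l. k l < card (layer lay l)" and tau: "\<tau> \<ge> 1" and run: "gasare_run lay gF x0 k \<tau> rho xis xs S"
    for k \<tau> rho xis xs S
  proof
    fix t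
    have R: "xs 0 = x0 \<and>
     (\<forall>t l. (t mod \<tau> = 0 \<longrightarrow> is_topk lay l (k l) (gF (xs t) (xis t)) (S t l)) \<and>
            (t mod \<tau> \<noteq> 0 \<longrightarrow> S t l = S (t - 1) l)) \<and>
     (\<forall>t. xs (Suc t) = xs t +
        (\<chi> p. if p \<in> S t (lay p)
               then rho t (lay p)
                      (\<lambda>s. if s \<le> t then mask_mult (S s (lay p)) (gF (xs s) (xis s)) else 0) $ p
               else 0))" using run unfolding gasare_run_def by blast
    have x0: "xs 0 = x0" using R by blast
    have Sr: "\<And>t l. t mod \<tau> = 0 \<Longrightarrow> is_topk lay l (k l) (gF (xs t) (xis t)) (S t l)"
      using R[THEN conjunct2, THEN conjunct1] by simp
    have Sk: "\<And>t l. t mod \<tau> \<noteq> 0 \<Longrightarrow> S t l = S (t - 1) l"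
      using R[THEN conjunct2, THEN conjunct1] by simp
    note up = R[THEN conjunct2, THEN conjunct2, rule_format]
    have avoid: "q0 \<notin> S t (lay q0)" if "t mod \<tau> = 0" "xs t $ q0 = 1" for t
      by (rule topk_avoid[OF Sr[OF that(1)] k[rule_format] refl _ fin]) (simp add: gFc absc that(2))
    show "xs t $ q0 = 1 \<and> q0 \<notin> S t (lay q0)"
    proof (induction t)
      case 0
      have "xs 0 $ q0 = 1" using x0 by (simp add: x0_def)
      then show ?case using avoid by simp
    next
      case (Suc t)
      have "xs (Suc t) $ q0 = xs t $ q0" using Suc.IH by (simp add: up)
      then have e: "xs (Suc t) $ q0 = 1" using Suc.IH by simp
      show ?case
      proof (cases "Suc t mod \<tau> = 0")
        case True then show ?thesis using avoid e by simp
      next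
        case False then show ?thesis using Sk[OF False] Suc.IH e by simp
      qed
    qed
  qed
  show ?thesis
  proof (rule exI[of _ f], rule exI[of _ gf], rule exI[of _ F], rule exI[of _ gF], rule exI[of _ D], rule exI[of _ x0], rule exI[of _ 4], intro conjI allI impI)
    show "(f has_derivative (\<lambda>h. gf x \<bullet> h)) (at x)" for x
      using d1[of a 0 w x] unfolding f_def gf_def by simp
    show "((\<lambda>y. F y xi) has_derivative (\<lambda>h. gF x xi \<bullet> h)) (at x)" for x xi
      using d1[of a "c xi" w x] unfolding F_def gF_def gf_def by simp
    show "integrable (measure_pmf D) (F x)" for x by (rule intD)
    show "f x = measure_pmf.expectation D (F x)" for x
      unfolding expD F_def f_def c_def by simp
    show "bdd_below (range f)" unfolding f_def by (intro bdd_belowI[of _ 0]) auto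
    show "\<exists>L. \<forall>x y. norm (gf x - gf y) \<le> L * norm (x - y)"
    proof (rule exI[of _ 2], intro allI)
      fix x y :: "real^'p"
      have abs2: "\<bar>2 * u - 2 * v\<bar> = 2 * \<bar>u - v\<bar>" for u v :: real by (simp add: abs_if)
      have "gf x - gf y = (2 * (x - y) $ q0) *\<^sub>R a" unfolding gf_def ax by (simp add: algebra_simps)
      then have "norm (gf x - gf y) = 2 * \<bar>(x - y) $ q0\<bar>" unfolding a_def using abs2 by (simp add: norm_axis_1)
      also have "\<dots> \<le> 2 * norm (x - y)" using component_le_norm_cart[of "x - y" q0] by simp
      finally show "norm (gf x - gf y) \<le> 2 * norm (x - y)" .
    qed
    show "\<exists>\<sigma> :: 'l \<Rightarrow> real. \<forall>x l.
        integrable (measure_pmf D) (\<lambda>xi. blk lay l (gF x xi)) \<and>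
        measure_pmf.expectation D (\<lambda>xi. blk lay l (gF x xi)) = blk lay l (gf x) \<and>
        integrable (measure_pmf D) (\<lambda>xi. (norm (blk lay l (gF x xi - gf x)))\<^sup>2) \<and>
        measure_pmf.expectation D (\<lambda>xi. (norm (blk lay l (gF x xi - gf x)))\<^sup>2) \<le> (\<sigma> l)\<^sup>2"
    proof (intro exI allI conjI)
      fix x l
      show "integrable (measure_pmf D) (\<lambda>xi. blk lay l (gF x xi))" by (rule intD)
      show "integrable (measure_pmf D) (\<lambda>xi. (norm (blk lay l (gF x xi - gf x)))\<^sup>2)" by (rule intD)
      show "measure_pmf.expectation D (\<lambda>xi. blk lay l (gF x xi)) = blk lay l (gf x)"
        unfolding expD gF_def c_def blk_def by (simp add: vec_eq_iff)
      have "gF x xi - gf x = c xi *\<^sub>R w" for xi unfolding gF_def by simp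
      have nb: "norm (blk lay l (gF x xi - gf x)) = 3 * norm (blk lay l w)" for xi
      proof -
        have "blk lay l (gF x xi - gf x) = c xi *\<^sub>R blk lay l w"
          unfolding gF_def blk_def by (simp add: vec_eq_iff)
        then show ?thesis using absc by simp
      qed
      show "measure_pmf.expectation D (\<lambda>xi. (norm (blk lay l (gF x xi - gf x)))\<^sup>2) \<le> (3 * norm (blk lay l w))\<^sup>2"
        unfolding expD nb by simp
    qed
    show "(0::real) < 4" by simp
    fix k :: "'l \<Rightarrow> nat" and \<tau> rho xis xs S t
    assume k: "\<forall>l. k l < card (layer lay l)" and tau: "1 \<le> \<tau>" and "\<forall>t. xis t \<in> set_pmf D"
      and run: "gasare_run lay gF x0 k \<tau> rho xis xs S"
    have "xs t $ q0 = 1" using main[OF k tau run] by blast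
    then have "gf (xs t) = 2 *\<^sub>R a" unfolding gf_def ax by simp
    then show "4 \<le> (norm (gf (xs t)))\<^sup>2" unfolding a_def by (simp add: norm_axis_1)
  qed
qed


end
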